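(* Let $p$ be a prime, let $\Gamma\subsetneq\mathbb{F}_p^*$ be a proper multiplicative subgroup, and let $A,B\subseteq\mathbb{F}_p$ be two sets with $A+B\subseteq\Gamma\sqcup\{0\}$. Then $|A||B|<4p$. *)

theory Defs
  imports "HOL-Computational_Algebra.Primes" "HOL-Library.Cardinality"
begin

definition mult_subgroup :: "'a::field set \<Rightarrow> bool" where
  "mult_subgroup G \<longleftrightarrow> G \<subseteq> - {0} \<and> 1 \<in> G \<and>
     (\<forall>x\<in>G. \<forall>y\<in>G. x * y \<in> G) \<and> (\<forall>x\<in>G. inverse x \<in> G)"

end

theory Submission
  imports Defs Complex_Main "HOL-Algebra.Algebraic_Closure_Type"
begin

lemma fring_pow: "x [^]\<^bsub>(ring_of_type_algebra::'a::field ring)\<^esub> (n::nat) = x ^ n"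
  by (induction n) (simp_all add: ring_of_type_algebra_def)

lemma gen_exists:
  "\<exists>g::'a::{field,finite}. g \<noteq> 0 \<and> (\<forall>x. x \<noteq> 0 \<longrightarrow> (\<exists>i::nat. x = g ^ i))"
proof -
  have fin: "finite (carrier (ring_of_type_algebra :: 'a ring))" by simp
  have c: "carrier (Multiplicative_Group.mult_of (ring_of_type_algebra::'a ring)) = UNIV - {0}"
    by (simp add: Multiplicative_Group.carrier_mult_of ring_of_type_algebra_def)
  obtain a where
    a: "a \<in> carrier (Multiplicative_Group.mult_of (ring_of_type_algebra::'a ring))" "carrier (Multiplicative_Group.mult_of (ring_of_type_algebra::'a ring)) = {a[^]\<^bsub>ring_of_type_algebra\<^esub> i | i::nat . i \<in> UNIV}"
    using field.finite_field_mult_group_has_gen[OF field_from_type_algebra fin] by (elim bexE) 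
  have a1: "a \<noteq> 0" using a(1) unfolding c by simp
  have a2: "UNIV - {0} = {a ^ i | i::nat . i \<in> UNIV}" using a(2) unfolding c fring_pow .
  have "\<forall>x. x \<noteq> 0 \<longrightarrow> (\<exists>i::nat. x = a ^ i)"
  proof (intro allI impI)
    fix x :: 'a assume "x \<noteq> 0"
    then have "x \<in> {a ^ i | i::nat . i \<in> UNIV}" using a2 by (metis DiffI UNIV_I singletonD)
    then show "\<exists>i::nat. x = a ^ i" by (elim CollectE exE conjE) (rule exI)
  qed
  then show ?thesis using a1 by (intro exI[of _ a]) simp
qed
lemma subgroup_pow_card:
  fixes G :: "'a::field set"
  assumes "finite G" "G \<subseteq> -{0}" "\<forall>x\<in>G. \<forall>y\<in>G. x*y \<in> G" "x \<in> G"
  shows "x ^ card G = 1"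
proof -
  have x0: "x \<noteq> 0" using assms by auto
  have inj: "inj_on ((*) x) G" using x0 by (auto simp: inj_on_def)
  have sub: "(*) x ` G \<subseteq> G" using assms by auto
  have eq: "(*) x ` G = G" using card_subset_eq[OF assms(1) sub] card_image[OF inj] by simp
  have "prod id G = prod id ((*) x ` G)" using eq by simp
  also have "\<dots> = prod ((*) x) G" using prod.reindex[OF inj] by simp
  also have "\<dots> = x ^ card G * prod id G" by (simp add: prod.distrib)
  finally have "prod id G * 1 = prod id G * x ^ card G" by (simp add: mult.commute)
  moreover have "prod id G \<noteq> 0" using assms(1,2) by (auto simp: prod_zero_iff)
  ultimately show ?thesis by simp
qed

lemma char_exists:
  fixes \<Gamma> :: "'a::{field,finite} set"
  assumes sg: "mult_subgroup \<Gamma>" and pr: "\<Gamma> \<noteq> -{0}"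
  shows "\<exists>\<chi>::'a\<Rightarrow>complex. \<chi> 0 = 0 \<and> (\<forall>x. x\<noteq>0 \<longrightarrow> cmod (\<chi> x) = 1) \<and>
     (\<forall>x y. x\<noteq>0 \<longrightarrow> y\<noteq>0 \<longrightarrow> \<chi>(x*y) = \<chi> x * \<chi> y) \<and> (\<forall>x\<in>\<Gamma>. \<chi> x = 1) \<and> (\<exists>g. g\<noteq>0 \<and> \<chi> g \<noteq> 1)"
proof -
  obtain g :: 'a where g0: "g\<noteq>0" and gen: "\<And>x. x\<noteq>0 \<Longrightarrow> \<exists>i. x = g^i"
    using gen_exists by blast
  define N where "N = card (-{0::'a})"
  have Gs: "\<Gamma> \<subseteq> -{0}" and G1: "1 \<in> \<Gamma>" and Gm: "\<forall>x\<in>\<Gamma>. \<forall>y\<in>\<Gamma>. x*y \<in> \<Gamma>"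
    using sg unfolding mult_subgroup_def by auto
  define m where "m = card \<Gamma>"
  have fin: "finite \<Gamma>" by simp
  have m_pos: "m > 0" using G1 fin m_def card_gt_0_iff by blast
  have m_lt: "m < N" unfolding m_def N_def
    using Gs pr by (intro psubset_card_mono) auto
  have gN: "g ^ N = 1" unfolding N_def
    by (rule subgroup_pow_card) (use g0 in auto)
  define n where "n = (LEAST k. 0 < k \<and> g^k = 1)"
  have n: "0<n \<and> g^n = 1" unfolding n_def by (rule LeastI[of _ N]) (use m_lt gN in auto)
  have nmin: "\<And>k. 0<k \<Longrightarrow> g^k=1 \<Longrightarrow> n \<le> k" unfolding n_def by (rule Least_le) auto
  have gmod: "g^k = g^(k mod n)" for k
  proof -
    have "g^k = (g^n)^(k div n) * g^(k mod n)"
      by (metis div_mult_mod_eq power_add power_mult mult.commute)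
    then show ?thesis using n by simp
  qed
  have ndvd: "n dvd k" if "g^k = 1" for k
  proof (rule ccontr)
    assume "\<not> n dvd k"
    then have "k mod n > 0" by (simp add: dvd_eq_mod_eq_0)
    moreover have "g^(k mod n) = 1" using gmod that by metis
    ultimately have "n \<le> k mod n" using nmin by blast
    moreover have "k mod n < n" using n by simp
    ultimately show False by simp
  qed
  have "-{0::'a} \<subseteq> (\<lambda>i. g^i) ` {..<n}"
  proof
    fix x :: 'a assume "x \<in> -{0}"
    then obtain i where "x = g^i" using gen by auto
    then have "x = g^(i mod n)" using gmod by metis
    moreover have "i mod n < n" using n by simp
    ultimately show "x \<in> (\<lambda>i. g^i) ` {..<n}" by blast
  qed
  then have "N \<le> n" unfolding N_def
    by (metis card_image_le card_lessThan card_mono finite_imageI finite_lessThan le_trans)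
  define w where "w k = cis (2*pi*real m*real k/real n)" for k :: nat
  have w_add: "w (i+j) = w i * w j" for i j
    by (simp add: w_def cis_mult add_divide_distrib distrib_left)
  have w_one: "w k = 1" if dv: "n dvd m*k" for k
  proof -
    obtain t where t: "m*k = n*t" using dv by (auto elim: dvdE)
    have e: "real m * real k = real n * real t" using t by (metis of_nat_mult)
    have "2*pi*real m*real k/real n = 2*pi*(real m*real k/real n)" by simp
    also have "\<dots> = 2*pi*real t" using e n by simp
    finally have eq: "2*pi*real m*real k/real n = 2*pi*real t" .
    have "real t \<in> \<int>" by simp
    then have c: "cis (2*pi*real t) = 1" by (rule cis_multiple_2pi)
    show ?thesis unfolding w_def by (simp only: eq c)
  qed
  have w_eq1: "w i = w j" if "g^i = g^j" "i \<le> j" for i j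
  proof -
    obtain d where d: "j = i + d" using \<open>i \<le> j\<close> le_Suc_ex by blast
    have "g^i * 1 = g^i * g^d" using that d by (simp add: power_add)
    then have "g^d = 1" using g0 by simp
    then have "n dvd m*d" using ndvd by simp
    then have "w d = 1" by (rule w_one)
    then show ?thesis using d by (simp add: w_add)
  qed
  have w_eq: "w i = w j" if "g^i = g^j" for i j
  proof (cases "i \<le> j")
    case True then show ?thesis using w_eq1[OF that] by blast
  next
    case False then have "j \<le> i" by simp
    then show ?thesis using w_eq1[of j i] that by simp
  qed
  define e where "e x = (SOME i. x = g^i)" for x
  have ge: "g^(e x) = x" if "x\<noteq>0" for x
    unfolding e_def by (rule someI_ex[OF gen[OF that], THEN sym])
  define \<chi> where "\<chi> x = (if x = 0 then 0 else w (e x))" for x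
  have w1: "w 1 \<noteq> 1"
  proof
    assume "w 1 = 1"
    then have "Re (w 1) = 1" by simp
    then have "cos (2*pi*real m/real n) = 1" unfolding w_def by simp
    then have "\<exists>t::int. 2*pi*real m/real n = real_of_int t * 2 * pi" by (simp only: cos_one_2pi_int)
    then obtain t :: int where t: "2*pi*real m/real n = real_of_int t * 2 * pi" by (elim exE)
    have "real m / real n = (2*pi*real m/real n) / (2*pi)" by simp
    also have "\<dots> = real_of_int t" using t by simp
    finally have "real m / real n = real_of_int t" .
    then have "real m = real_of_int t * real n" using n by (simp add: field_simps)
    then have "real_of_int (int m) = real_of_int (t * int n)" by simp
    then have "int m = t * int n" by (simp only: of_int_eq_iff)
    moreover have "0 < int m" "int m < int n" using m_pos m_lt \<open>N \<le> n\<close> by auto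
    ultimately show False
    proof -
      assume a: "int m = t * int n" "0 < int m" "int m < int n"
      have "t > 0"
      proof (rule ccontr)
        assume "\<not> t > 0"
        then have "t * int n \<le> 0" by (simp add: mult_nonpos_nonneg)
        then show False using a by linarith
      qed
      then have "1 \<le> t" by simp
      then have "1 * int n \<le> t * int n" by (rule mult_right_mono) simp
      then show False using a by linarith
    qed
  qed
  show ?thesis
  proof (intro exI[of _ \<chi>] conjI allI impI ballI)
    show "\<chi> 0 = 0" by (simp add: \<chi>_def)
  next
    fix x :: 'a assume "x \<noteq> 0" then show "cmod (\<chi> x) = 1" by (simp add: \<chi>_def w_def)
  next
    fix x y :: 'a assume xy: "x \<noteq> 0" "y \<noteq> 0"
    have "g^(e (x*y)) = g^(e x + e y)" using xy ge by (simp add: power_add)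
    then have "w (e (x*y)) = w (e x + e y)" by (rule w_eq)
    then show "\<chi>(x*y) = \<chi> x * \<chi> y" using xy by (simp add: \<chi>_def w_add)
  next
    fix x assume xG: "x \<in> \<Gamma>"
    then have x0: "x \<noteq> 0" using Gs by auto
    have "x ^ m = 1" unfolding m_def by (rule subgroup_pow_card) (use Gs Gm xG in auto)
    then have "g^(e x * m) = 1" using ge[OF x0] by (simp add: power_mult)
    then have "n dvd m * e x" using ndvd by (simp add: mult.commute)
    then show "\<chi> x = 1" using w_one x0 by (simp add: \<chi>_def)
  next
    have "w (e g) = w 1" using ge[OF g0] by (intro w_eq) simp
    then have "\<chi> g = w 1" using g0 by (simp add: \<chi>_def)
    then show "\<exists>g. g \<noteq> 0 \<and> \<chi> g \<noteq> 1" using g0 w1 by metis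
  qed
qed

lemma cs_real:
  fixes r :: "'b \<Rightarrow> real"
  shows "(\<Sum>i\<in>A. r i)^2 \<le> real (card A) * (\<Sum>i\<in>A. (r i)^2)"
proof -
  have "(\<Sum>i\<in>A. r i)^2 = (\<Sum>i\<in>A. \<Sum>j\<in>A. r i * r j)" by (simp add: power2_eq_square sum_product)
  also have "\<dots> \<le> (\<Sum>i\<in>A. \<Sum>j\<in>A. ((r i)^2 + (r j)^2)/2)"
  proof (intro sum_mono)
    fix i j
    have "0 \<le> (r i - r j)^2" by simp
    then show "r i * r j \<le> ((r i)^2 + (r j)^2)/2" by (simp add: power2_eq_square algebra_simps)
  qed
  also have "\<dots> = real (card A) * (\<Sum>i\<in>A. (r i)^2)"
    by (simp add: add_divide_distrib sum.distrib sum_divide_distrib[symmetric] sum_distrib_left[symmetric])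
  finally show ?thesis .
qed

locale mchar =
  fixes \<chi> :: "'a::{field,finite} \<Rightarrow> complex" and g :: 'a
  assumes chi0: "\<chi> 0 = 0"
    and chinorm: "\<And>x. x \<noteq> 0 \<Longrightarrow> cmod (\<chi> x) = 1"
    and chimult: "\<And>x y. x \<noteq> 0 \<Longrightarrow> y \<noteq> 0 \<Longrightarrow> \<chi> (x*y) = \<chi> x * \<chi> y"
    and g0: "g \<noteq> 0" and chig: "\<chi> g \<noteq> 1"
begin

lemma chimult': "\<chi> (x*y) = \<chi> x * \<chi> y"
  by (cases "x = 0 \<or> y = 0") (auto simp: chi0 chimult)

lemma chi_nz: "x \<noteq> 0 \<Longrightarrow> \<chi> x \<noteq> 0"
  using chinorm by fastforce

lemma chi1: "\<chi> 1 = 1"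
proof -
  have "\<chi> 1 * 1 = \<chi> 1 * \<chi> 1" using chimult'[of 1 1] by simp
  then show ?thesis using chi_nz[of 1] by (metis mult_left_cancel zero_neq_one)
qed

lemma chi_inv: "\<chi> (inverse x) = cnj (\<chi> x)"
proof (cases "x = 0")
  case True then show ?thesis by (simp add: chi0)
next
  case False
  have a: "\<chi> x * \<chi> (inverse x) = 1" using chimult'[of x "inverse x"] False chi1 by simp
  have b: "\<chi> x * cnj (\<chi> x) = 1" using chinorm[OF False]
    by (metis complex_norm_square of_real_1 power_one)
  from a b have "\<chi> x * \<chi> (inverse x) = \<chi> x * cnj (\<chi> x)" by simp
  then show ?thesis using chi_nz[OF False] by simp
qed

lemma chi_sum0: "(\<Sum>x\<in>UNIV. \<chi> x) = 0"
proof -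
  have inj: "inj ((*) g)" using g0 by (auto simp: inj_on_def)
  have surj: "(*) g ` UNIV = UNIV"
    using inj by (simp add: finite_UNIV_inj_surj)
  have "(\<Sum>x\<in>UNIV. \<chi> x) = (\<Sum>x\<in>(*) g ` UNIV. \<chi> x)" using surj by simp
  also have "\<dots> = (\<Sum>x\<in>UNIV. \<chi> (g*x))" using sum.reindex[OF inj] by simp
  also have "\<dots> = \<chi> g * (\<Sum>x\<in>UNIV. \<chi> x)" by (simp add: chimult' sum_distrib_left)
  finally have "(1 - \<chi> g) * (\<Sum>x\<in>UNIV. \<chi> x) = 0" by (simp add: algebra_simps)
  then show ?thesis using chig by simp
qed

lemma orth_ne:
  assumes "b \<noteq> b'"
  shows "(\<Sum>x\<in>UNIV. \<chi> (x+b) * cnj (\<chi> (x+b'))) = -1"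
proof -
  define h where "h x = (x+b) * inverse (x+b')" for x
  have pt: "\<chi> (x+b) * cnj (\<chi> (x+b')) = \<chi> (h x)" for x
    by (simp add: h_def chimult' chi_inv)
  have "(\<Sum>x\<in>UNIV. \<chi> (h x)) = (\<Sum>x\<in>UNIV - {-b'}. \<chi> (h x)) + \<chi> (h (-b'))"
    by (simp add: sum.remove[of UNIV "-b'"] add.commute)
  also have "\<chi> (h (-b')) = 0" by (simp add: h_def chi0)
  finally have s1: "(\<Sum>x\<in>UNIV. \<chi> (h x)) = (\<Sum>x\<in>UNIV - {-b'}. \<chi> (h x))" by simp
  have inj: "inj_on h (UNIV - {-b'})"
  proof (rule inj_onI)
    fix x y assume x: "x \<in> UNIV - {-b'}" and y: "y \<in> UNIV - {-b'}" and e: "h x = h y"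
    have xb: "x + b' \<noteq> 0" using x by (auto simp: add_eq_0_iff)
    have yb: "y + b' \<noteq> 0" using y by (auto simp: add_eq_0_iff)
    from e have "(x+b) * (y+b') = (y+b) * (x+b')" using xb yb
      by (simp add: h_def field_simps)
    then have "(x - y) * (b' - b) = 0" by (simp add: algebra_simps)
    then show "x = y" using assms by simp
  qed
  have sub: "h ` (UNIV - {-b'}) \<subseteq> UNIV - {1}"
  proof
    fix y assume "y \<in> h ` (UNIV - {-b'})"
    then obtain x where x: "x \<noteq> -b'" and y: "y = h x" by auto
    have xb: "x + b' \<noteq> 0" using x by (auto simp: add_eq_0_iff)
    have "h x \<noteq> 1"
    proof
      assume "h x = 1"
      then have "x + b = x + b'" using xb by (simp add: h_def field_simps)
      then show False using assms by simp
    qed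
    then show "y \<in> UNIV - {1}" using y by simp
  qed
  have cardeq: "card (h ` (UNIV - {-b'})) = card (UNIV - {1::'a})"
    using card_image[OF inj] by (simp add: card_Diff_singleton)
  have img: "h ` (UNIV - {-b'}) = UNIV - {1}"
    using card_subset_eq[OF _ sub cardeq] by simp
  have "(\<Sum>x\<in>UNIV - {-b'}. \<chi> (h x)) = (\<Sum>y\<in>h ` (UNIV - {-b'}). \<chi> y)"
    by (simp add: sum.reindex[OF inj] o_def)
  also have "\<dots> = (\<Sum>y\<in>UNIV - {1}. \<chi> y)" using img by simp
  also have "\<dots> = (\<Sum>y\<in>UNIV. \<chi> y) - \<chi> 1" by (simp add: sum_diff1)
  also have "\<dots> = -1" by (simp add: chi_sum0 chi1)
  finally show ?thesis using s1 pt by simp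
qed

lemma orth_eq:
  "(\<Sum>x\<in>UNIV. \<chi> (x+b) * cnj (\<chi> (x+b))) = of_nat (card (UNIV::'a set)) - 1"
proof -
  have pt: "\<chi> (x+b) * cnj (\<chi> (x+b)) = (if x = -b then 0 else 1)" for x
  proof (cases "x = -b")
    case True then show ?thesis by (simp add: chi0)
  next
    case False
    then have "x + b \<noteq> 0" by (auto simp: add_eq_0_iff)
    then have "cmod (\<chi> (x+b)) = 1" by (rule chinorm)
    then show ?thesis using False by (simp add: complex_norm_square[symmetric])
  qed
  have "(\<Sum>x\<in>UNIV. \<chi> (x+b) * cnj (\<chi> (x+b))) = (\<Sum>x\<in>UNIV. (if x = -b then 0 else 1 :: complex))"
    using pt by simp
  also have "\<dots> = of_nat (card (UNIV - {-b}))"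
    by (simp add: sum.If_cases Diff_eq Compl_eq)
  also have "\<dots> = of_nat (card (UNIV::'a set)) - 1" using finite_UNIV_card_ge_0[where ?'a='a] by (simp add: card_Diff_singleton of_nat_diff Suc_leI)
  finally show ?thesis .
qed

lemma orth: "(\<Sum>x\<in>UNIV. \<chi> (x+b) * cnj (\<chi> (x+b'))) = (if b = b' then of_nat (card (UNIV::'a set)) else 0) - 1"
  using orth_eq orth_ne by auto

end
lemma final_arith:
  fixes N Z p :: real
  assumes "0 \<le> Z" "Z^2 \<le> N" "Z \<le> N" "(N - Z)^2 \<le> N * p" "p \<ge> 2"
  shows "N < 4 * p"
proof (rule ccontr)
  assume "\<not> N < 4 * p"
  then have N4: "N \<ge> 4 * p" by simp
  define s where "s = sqrt N"
  define q where "q = sqrt p"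
  have N0: "N \<ge> 0" using N4 assms by simp
  have s2: "s^2 = N" using N0 by (simp add: s_def)
  have q2: "q^2 = p" using assms by (simp add: q_def)
  have s0: "s \<ge> 0" "q \<ge> 0" using N0 assms(5) by (simp_all add: s_def q_def)
  have q1: "q > 1"
  proof (rule ccontr)
    assume "\<not> q > 1"
    then have "q^2 \<le> 1" using s0 by (simp add: power_le_one)
    then show False using q2 assms(5) by simp
  qed
  have sq: "s \<ge> 2 * q"
  proof -
    have "(2*q)^2 \<le> s^2" using N4 s2 q2 by (simp add: power_mult_distrib)
    then show ?thesis by (rule power2_le_imp_le) (rule s0(1))
  qed
  have "Z^2 \<le> s^2" using assms(2) s2 by simp
  then have Zs: "Z \<le> s" by (rule power2_le_imp_le) (rule s0(1))
  have s1: "s \<ge> 1" using sq q1 by simp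
  have "s^2 - s \<ge> 0" using s1 by (simp add: power2_eq_square)
  have "s^2 - s \<le> N - Z" using Zs s2 by linarith
  then have "(s^2 - s)^2 \<le> (N - Z)^2" using \<open>s^2 - s \<ge> 0\<close> by (rule power_mono)
  also have "\<dots> \<le> s^2 * q^2" using assms(4) s2 q2 by simp
  finally have "(s * (s - 1))^2 \<le> (s * q)^2" by (simp add: power2_eq_square algebra_simps)
  then have "s * (s - 1) \<le> s * q" by (rule power2_le_imp_le) (use s0 in simp)
  then have "s - 1 \<le> q" using s1 by simp
  then show False using sq q1 by simp
qed

hide_const (open) Divisibility.prime

theorem lemma5:
  fixes \<Gamma> A B :: "'a::{field,finite} set"
  assumes "prime CARD('a)"
    and "mult_subgroup \<Gamma>"
    and "\<Gamma> \<noteq> - {0}"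
    and "\<forall>a\<in>A. \<forall>b\<in>B. a + b \<in> \<Gamma> \<union> {0}"
  shows "card A * card B < 4 * CARD('a)"
proof -
  obtain \<chi> :: "'a \<Rightarrow> complex" where c0: "\<chi> 0 = 0" and cn: "\<forall>x. x\<noteq>0 \<longrightarrow> cmod (\<chi> x) = 1"
    and cm: "\<forall>x y. x\<noteq>0 \<longrightarrow> y\<noteq>0 \<longrightarrow> \<chi>(x*y) = \<chi> x * \<chi> y" and cG: "\<forall>x\<in>\<Gamma>. \<chi> x = 1"
    and cg: "\<exists>g. g\<noteq>0 \<and> \<chi> g \<noteq> 1"
    using char_exists[OF assms(2,3)] by blast
  obtain g where g: "g \<noteq> 0" "\<chi> g \<noteq> 1" using cg by blast
  interpret mchar \<chi> g
    by unfold_locales (use c0 cn cm g in auto)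
  define p where "p = card (UNIV :: 'a set)"
  have pCARD: "CARD('a) = p" by (simp add: p_def)
  have p2: "p \<ge> 2" using assms(1) unfolding pCARD by (simp add: prime_ge_2_nat)
  define f where "f x = (\<Sum>b\<in>B. \<chi> (x+b))" for x
  define ZS where "ZS = {ab \<in> A \<times> B. fst ab + snd ab = 0}"
  define YS where "YS = {ab \<in> A \<times> B. fst ab + snd ab \<noteq> 0}"
  define N where "N = card A * card B"
  have finA: "finite A" and finB: "finite B" by simp_all
  have card_split: "card YS + card ZS = N"
  proof -
    have e1: "A \<times> B = YS \<union> ZS" and e2: "YS \<inter> ZS = {}" unfolding YS_def ZS_def by auto
    have "card (A \<times> B) = card (YS \<union> ZS)" using e1 by simp
    also have "\<dots> = card YS + card ZS" using e2 by (intro card_Un_disjoint) auto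
    finally have "card (A \<times> B) = card YS + card ZS" .
    then show ?thesis by (simp add: N_def card_cartesian_product)
  qed
  have ZA: "card ZS \<le> card A"
  proof -
    have "inj_on fst ZS" unfolding ZS_def by (rule inj_onI) (auto simp: add_eq_0_iff prod_eq_iff)
    moreover have "fst ` ZS \<subseteq> A" unfolding ZS_def by auto
    ultimately show ?thesis by (metis card_inj_on_le finA)
  qed
  have ZB: "card ZS \<le> card B"
  proof -
    have "inj_on snd ZS" unfolding ZS_def by (rule inj_onI) (auto simp: add_eq_0_iff prod_eq_iff)
    moreover have "snd ` ZS \<subseteq> B" unfolding ZS_def by auto
    ultimately show ?thesis by (metis card_inj_on_le finB)
  qed
  have tm: "\<chi> (a+b) = (if a + b = 0 then 0 else 1)" if "a \<in> A" "b \<in> B" for a b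
    using assms(4) that cG c0 by auto
  have T: "(\<Sum>a\<in>A. f a) = of_nat (card YS)"
  proof -
    have "(\<Sum>a\<in>A. f a) = (\<Sum>a\<in>A. \<Sum>b\<in>B. (if a + b = 0 then 0 else 1 :: complex))"
      unfolding f_def using tm by (intro sum.cong refl) auto
    also have "\<dots> = (\<Sum>ab\<in>A \<times> B. (if fst ab + snd ab = 0 then 0 else 1 :: complex))"
      by (simp add: sum.cartesian_product case_prod_beta)
    also have "\<dots> = (\<Sum>ab\<in>YS. 1)"
      unfolding YS_def by (rule sum.mono_neutral_cong_right) auto
    also have "\<dots> = of_nat (card YS)" by simp
    finally show ?thesis .
  qed
  have sq: "(\<Sum>x\<in>UNIV. f x * cnj (f x)) = of_nat (card B) * (of_nat p - of_nat (card B))"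
  proof -
    have "(\<Sum>x\<in>UNIV. f x * cnj (f x)) = (\<Sum>x\<in>UNIV. \<Sum>b\<in>B. \<Sum>b'\<in>B. \<chi> (x+b) * cnj (\<chi> (x+b')))"
      unfolding f_def by (simp add: sum_product)
    also have "\<dots> = (\<Sum>b\<in>B. \<Sum>b'\<in>B. \<Sum>x\<in>UNIV. \<chi> (x+b) * cnj (\<chi> (x+b')))"
      by (subst sum.swap) (subst (2) sum.swap, rule refl)
    also have "\<dots> = (\<Sum>b\<in>B. \<Sum>b'\<in>B. (if b = b' then of_nat p else 0) - 1)"
      unfolding p_def by (simp add: orth)
    also have "\<dots> = (\<Sum>b\<in>B. of_nat p - of_nat (card B))"
      using finB by (simp add: sum_subtractf)
    also have "\<dots> = of_nat (card B) * (of_nat p - of_nat (card B))" by simp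
    finally show ?thesis .
  qed
  have sqr: "(\<Sum>x\<in>UNIV. (cmod (f x))^2) = real (card B) * (real p - real (card B))"
  proof -
    have "complex_of_real (\<Sum>x\<in>UNIV. (cmod (f x))^2) = (\<Sum>x\<in>UNIV. f x * cnj (f x))"
      by (simp only: of_real_sum complex_norm_square)
    also have "\<dots> = complex_of_real (real (card B) * (real p - real (card B)))" using sq by simp
    finally show ?thesis by (simp only: of_real_eq_iff)
  qed
  have "(real N - real (card ZS))^2 = (cmod (\<Sum>a\<in>A. f a))^2"
    using T card_split by (simp add: of_nat_diff)
  also have "\<dots> \<le> (\<Sum>a\<in>A. cmod (f a))^2"
    by (intro power_mono norm_sum norm_ge_zero)
  also have "\<dots> \<le> real (card A) * (\<Sum>a\<in>A. (cmod (f a))^2)" by (rule cs_real)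
  also have "\<dots> \<le> real (card A) * (\<Sum>x\<in>UNIV. (cmod (f x))^2)"
    by (intro mult_left_mono sum_mono2) auto
  also have "\<dots> \<le> real (card A) * (real (card B) * real p)"
    unfolding sqr by (intro mult_left_mono) auto
  also have "\<dots> = real N * real p" by (simp add: N_def)
  finally have ineq: "(real N - real (card ZS))^2 \<le> real N * real p" .
  have "real (card ZS)^2 \<le> real N"
  proof -
    have "card ZS * card ZS \<le> card A * card B" using ZA ZB by (rule mult_le_mono)
    then show ?thesis by (simp add: N_def power2_eq_square flip: of_nat_mult)
  qed
  moreover have "real (card ZS) \<le> real N" using card_split by simp
  ultimately have "real N < 4 * real p"
    using final_arith[of "real (card ZS)" "real N" "real p"] ineq p2 by simp
  then show ?thesis unfolding pCARD N_def by linarith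
qed

end
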